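(* Let $\theta(q,x):=\sum_{j=0}^{\infty}q^{j(j+1)/2}x^j$ and $w:=3/\sqrt{2}$. For all $(q,t)\in[0.6,0.75]\times[1,w]$, one has $\theta(q,-t+wi)\neq 0$. *)

theory Defs
  imports "HOL-Analysis.Analysis"
begin

definition ptheta :: "real \<Rightarrow> complex \<Rightarrow> complex" where
  "ptheta q x = (\<Sum>j. complex_of_real (q ^ (j * (j + 1) div 2)) * x ^ j)"

end

theory Submission
  imports Defs
begin


type_synonym ivl = "int \<times> int"
type_synonym civ = "ivl \<times> ivl"
definition sc :: int where "sc = 16384"
definition imulg :: "ivl \<Rightarrow> ivl \<Rightarrow> ivl" where
 "imulg x y = (case x of (a,b) \<Rightarrow> case y of (c,d) \<Rightarrow>
    let p1 = a*c; p2 = a*d; p3 = b*c; p4 = b*d in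
    (min (min p1 p2) (min p3 p4) div sc, - ((- max (max p1 p2) (max p3 p4)) div sc)))"
definition imulp :: "ivl \<Rightarrow> ivl \<Rightarrow> ivl" where
 "imulp x y = (case x of (a,b) \<Rightarrow> case y of (c,d) \<Rightarrow>
    ((if 0 \<le> a then a*c else a*d) div sc, - ((- (if 0 \<le> b then b*d else b*c)) div sc)))"
definition imul :: "ivl \<Rightarrow> ivl \<Rightarrow> ivl" where
 "imul x y = (if 0 \<le> fst y then imulp x y else if 0 \<le> fst x then imulp y x
    else if snd y \<le> 0 then (let z = imulp x (- snd y, - fst y) in (- snd z, - fst z)) else imulg x y)"
definition iadd :: "ivl \<Rightarrow> ivl \<Rightarrow> ivl" where "iadd x y = (fst x + fst y, snd x + snd y)"
definition ineg :: "ivl \<Rightarrow> ivl" where "ineg x = (- snd x, - fst x)"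
definition cmul :: "civ \<Rightarrow> civ \<Rightarrow> civ" where
 "cmul z u = (iadd (imul (fst z) (fst u)) (ineg (imul (snd z) (snd u))), iadd (imul (fst z) (snd u)) (imul (snd z) (fst u)))"
definition cadd :: "civ \<Rightarrow> civ \<Rightarrow> civ" where "cadd z u = (iadd (fst z) (fst u), iadd (snd z) (snd u))"
definition rsc :: "ivl \<Rightarrow> civ \<Rightarrow> civ" where "rsc s z = (imul s (fst z), imul s (snd z))"
definition nsc :: "int \<Rightarrow> civ \<Rightarrow> civ" where "nsc n z = ((n * fst (fst z), n * snd (fst z)), (n * fst (snd z), n * snd (snd z)))"

definition inI :: "real \<Rightarrow> ivl \<Rightarrow> bool" where
  "inI x I \<longleftrightarrow> real_of_int (fst I) \<le> x * 16384 \<and> x * 16384 \<le> real_of_int (snd I)"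
definition inC :: "complex \<Rightarrow> civ \<Rightarrow> bool" where
  "inC z Z \<longleftrightarrow> inI (Re z) (fst Z) \<and> inI (Im z) (snd Z)"

lemma div_lo: "real_of_int (p div sc) \<le> real_of_int p / 16384"
proof -
  have "real_of_int (p div sc) = of_int \<lfloor>real_of_int p / real_of_int sc\<rfloor>"
    by (simp only: floor_divide_of_int_eq)
  also have "\<dots> \<le> real_of_int p / real_of_int sc" by (rule of_int_floor_le)
  finally show ?thesis by (simp add: sc_def)
qed

lemma div_hi: "real_of_int p / 16384 \<le> real_of_int (- ((- p) div sc))"
  using div_lo[of "-p"] by simp

lemma mulp_bounds:
  fixes A B C D x y :: real
  assumes "A \<le> x" "x \<le> B" "C \<le> y" "y \<le> D" "0 \<le> C"
  shows "(if 0 \<le> A then A*C else A*D) \<le> x*y \<and> x*y \<le> (if 0 \<le> B then B*D else B*C)"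
proof
  show "(if 0 \<le> A then A*C else A*D) \<le> x*y"
  proof (cases "0 \<le> A")
    case True
    have "A*C \<le> x*C" using assms True by (intro mult_right_mono) auto
    also have "\<dots> \<le> x*y" using assms True by (intro mult_left_mono) auto
    finally show ?thesis using True by simp
  next
    case False
    have "A*D \<le> A*y" using assms False by (intro mult_left_mono_neg) auto
    also have "\<dots> \<le> x*y" using assms by (intro mult_right_mono) auto
    finally show ?thesis using False by simp
  qed
next
  show "x*y \<le> (if 0 \<le> B then B*D else B*C)"
  proof (cases "0 \<le> B")
    case True
    have "x*y \<le> B*y" using assms by (intro mult_right_mono) auto
    also have "\<dots> \<le> B*D" using assms True by (intro mult_left_mono) auto
    finally show ?thesis using True by simp
  next
    case False
    have "x*y \<le> B*y" using assms by (intro mult_right_mono) auto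
    also have "\<dots> \<le> B*C" using assms False by (intro mult_left_mono_neg) auto
    finally show ?thesis using False by simp
  qed
qed

lemma lin_bounds:
  fixes A B x y :: real
  assumes "A \<le> x" "x \<le> B"
  shows "min (A*y) (B*y) \<le> x*y \<and> x*y \<le> max (A*y) (B*y)"
proof (cases "0 \<le> y")
  case True
  then show ?thesis using assms mult_right_mono[of A x y] mult_right_mono[of x B y] by auto
next
  case False
  then show ?thesis using assms mult_right_mono_neg[of A x y] mult_right_mono_neg[of x B y] by auto
qed

lemma mulg_bounds:
  fixes A B C D x y :: real
  assumes "A \<le> x" "x \<le> B" "C \<le> y" "y \<le> D"
  shows "min (min (A*C) (A*D)) (min (B*C) (B*D)) \<le> x*y \<and> x*y \<le> max (max (A*C) (A*D)) (max (B*C) (B*D))"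
proof -
  have 1: "min (A*y) (B*y) \<le> x*y \<and> x*y \<le> max (A*y) (B*y)" using lin_bounds assms by blast
  have 2: "min (y*A) (y*B) \<le> y*A \<and> y*A \<le> max (y*A) (y*B)" by auto
  have "min (C*A) (D*A) \<le> y*A \<and> y*A \<le> max (C*A) (D*A)" using lin_bounds[OF assms(3,4)] by blast
  moreover have "min (C*B) (D*B) \<le> y*B \<and> y*B \<le> max (C*B) (D*B)" using lin_bounds[OF assms(3,4)] by blast
  ultimately show ?thesis using 1 by (auto simp: mult.commute min_def max_def split: if_splits)
qed

lemma imulp_sound:
  assumes "inI x X" "inI y Y" "0 \<le> fst Y"
  shows "inI (x*y) (imulp X Y)"
proof -
  obtain a b where X: "X = (a,b)" by (cases X)
  obtain c d where Y: "Y = (c,d)" by (cases Y)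
  let ?x = "x*16384" and ?y = "y*16384"
  have h: "real_of_int a \<le> ?x" "?x \<le> real_of_int b" "real_of_int c \<le> ?y" "?y \<le> real_of_int d" "0 \<le> real_of_int c"
    using assms X Y by (auto simp: inI_def)
  note mb = mulp_bounds[OF h]
  have e: "x*y*16384 = ?x * ?y / 16384" by simp
  have lo: "real_of_int ((if 0 \<le> a then a*c else a*d) div sc) \<le> x*y*16384"
    using div_lo[of "if 0 \<le> a then a*c else a*d"] mb unfolding e
    by (auto split: if_splits simp: divide_right_mono)
  have hi: "x*y*16384 \<le> real_of_int (- ((- (if 0 \<le> b then b*d else b*c)) div sc))"
    using div_hi[of "if 0 \<le> b then b*d else b*c"] mb unfolding e
    by (auto split: if_splits simp: divide_right_mono)
  show ?thesis using lo hi by (simp add: inI_def imulp_def X Y)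
qed



lemma imulg_sound:
  assumes "inI x X" "inI y Y"
  shows "inI (x*y) (imulg X Y)"
proof -
  obtain a b where X: "X = (a,b)" by (cases X)
  obtain c d where Y: "Y = (c,d)" by (cases Y)
  let ?x = "x*16384" and ?y = "y*16384"
  have h: "real_of_int a \<le> ?x" "?x \<le> real_of_int b" "real_of_int c \<le> ?y" "?y \<le> real_of_int d"
    using assms X Y by (auto simp: inI_def)
  note mb = mulg_bounds[OF h]
  have e: "x*y*16384 = ?x * ?y / 16384" by simp
  let ?lo = "min (min (a*c) (a*d)) (min (b*c) (b*d))"
  let ?hi = "max (max (a*c) (a*d)) (max (b*c) (b*d))"
  have "real_of_int ?lo = min (min (of_int a * of_int c) (of_int a * of_int d)) (min (of_int b * of_int c) (of_int b * of_int d))"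
    by (simp add: of_int_min)
  then have l1: "real_of_int ?lo \<le> ?x * ?y" using mb by linarith
  have "real_of_int ?hi = max (max (of_int a * of_int c) (of_int a * of_int d)) (max (of_int b * of_int c) (of_int b * of_int d))"
    by (simp add: of_int_max)
  then have h1: "?x * ?y \<le> real_of_int ?hi" using mb by linarith
  have lo: "real_of_int (?lo div sc) \<le> x*y*16384"
    using div_lo[of ?lo] l1 unfolding e by (meson divide_right_mono order_trans zero_le_numeral)
  have hi: "x*y*16384 \<le> real_of_int (- ((- ?hi) div sc))"
    using div_hi[of ?hi] h1 unfolding e by (meson divide_right_mono order_trans zero_le_numeral)
  show ?thesis using lo hi by (simp add: inI_def imulg_def X Y Let_def)
qed

lemma ineg_sound: "inI x X \<Longrightarrow> inI (- x) (ineg X)"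
  by (auto simp: inI_def ineg_def)

lemma iadd_sound: "inI x X \<Longrightarrow> inI y Y \<Longrightarrow> inI (x + y) (iadd X Y)"
  by (auto simp: inI_def iadd_def algebra_simps)

lemma imul_sound:
  assumes "inI x X" "inI y Y"
  shows "inI (x*y) (imul X Y)"
proof -
  consider "0 \<le> fst Y" | "\<not> 0 \<le> fst Y" "0 \<le> fst X" | "\<not> 0 \<le> fst Y" "\<not> 0 \<le> fst X" "snd Y \<le> 0"
    | "\<not> 0 \<le> fst Y" "\<not> 0 \<le> fst X" "\<not> snd Y \<le> 0" by blast
  then show ?thesis
  proof cases
    case 1 then show ?thesis using imulp_sound[OF assms] by (simp add: imul_def)
  next
    case 2 then show ?thesis using imulp_sound[OF assms(2,1)] by (simp add: imul_def mult.commute)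
  next
    case 3
    have n: "inI (-y) (- snd Y, - fst Y)" using assms(2) by (auto simp: inI_def)
    have "inI (x * (-y)) (imulp X (- snd Y, - fst Y))" using imulp_sound[OF assms(1) n] 3 by simp
    then have "inI (- (x * (-y))) (ineg (imulp X (- snd Y, - fst Y)))" by (rule ineg_sound)
    then show ?thesis using 3 by (simp add: imul_def Let_def ineg_def)
  next
    case 4 then show ?thesis using imulg_sound[OF assms] by (simp add: imul_def)
  qed
qed

lemma cmul_sound:
  assumes "inC z Z" "inC u U" shows "inC (z*u) (cmul Z U)"
proof -
  have r: "inI (Re z * Re u + - (Im z * Im u)) (iadd (imul (fst Z) (fst U)) (ineg (imul (snd Z) (snd U))))"
    using assms unfolding inC_def by (intro iadd_sound imul_sound ineg_sound) auto
  have i: "inI (Re z * Im u + Im z * Re u) (iadd (imul (fst Z) (snd U)) (imul (snd Z) (fst U)))"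
    using assms unfolding inC_def by (intro iadd_sound imul_sound) auto
  show ?thesis using r i unfolding inC_def cmul_def by simp
qed

lemma cadd_sound: "inC z Z \<Longrightarrow> inC u U \<Longrightarrow> inC (z+u) (cadd Z U)"
  unfolding inC_def cadd_def by (auto intro!: iadd_sound)

lemma rsc_sound: "inI r R \<Longrightarrow> inC z Z \<Longrightarrow> inC (of_real r * z) (rsc R Z)"
  unfolding inC_def rsc_def by (auto intro!: imul_sound)

lemma nsc_sound:
  assumes "0 \<le> n" "inC z Z" shows "inC (of_int n * z) (nsc n Z)"
proof -
  have m: "inI (of_int n * x) (n * fst X, n * snd X)" if "inI x X" for x X
    using that assms(1) mult_left_mono[of "of_int (fst X)" "x*16384" "of_int n"]
      mult_left_mono[of "x*16384" "of_int (snd X)" "of_int n"]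
    by (auto simp: inI_def algebra_simps)
  show ?thesis using assms(2) m unfolding inC_def nsc_def by auto
qed



datatype st = St ivl civ civ civ civ civ civ civ civ
definition czero :: civ where "czero = ((0,0),(0,0))"
definition init :: st where "init = St (sc,sc) ((sc,sc),(0,0)) czero ((sc,sc),(0,0)) czero czero czero czero czero"
definition nnat :: "nat \<Rightarrow> nat" where "nnat j = j * (j+1) div 2"
definition nn :: "nat \<Rightarrow> int" where "nn j = int (nnat j)"
fun step :: "nat \<Rightarrow> ivl \<Rightarrow> civ \<Rightarrow> st \<Rightarrow> st" where
 "step j Q X (St S T A V DQ DT DQQ DQT DTT) =
   (let S' = imul S Q; A' = rsc S' T; B' = rsc S' A; T' = cmul A' X; n = nn j; jj = int j in
    St S' T' A' (cadd V T') (cadd DQ (nsc n T')) (cadd DT (nsc jj A'))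
       (cadd DQQ (nsc (n*(n-1)) T')) (cadd DQT (nsc (n*jj) A')) (cadd DTT (nsc (jj*(jj-1)) B')))"
fun evk :: "nat \<Rightarrow> ivl \<Rightarrow> civ \<Rightarrow> st" where
 "evk 0 Q X = init" | "evk (Suc k) Q X = step (Suc k) Q X (evk k Q X)"

datatype est = ESt real complex complex complex complex complex complex complex complex
definition einit :: est where "einit = ESt 1 1 0 1 0 0 0 0 0"
fun estep :: "nat \<Rightarrow> real \<Rightarrow> complex \<Rightarrow> est \<Rightarrow> est" where
 "estep j q X (ESt S T A V DQ DT DQQ DQT DTT) =
   (let S' = S*q; A' = of_real S' * T; B' = of_real S' * A; T' = A' * X; n = nn j; jj = int j in
    ESt S' T' A' (V + T') (DQ + of_int n * T') (DT + of_int jj * A')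
       (DQQ + of_int (n*(n-1)) * T') (DQT + of_int (n*jj) * A') (DTT + of_int (jj*(jj-1)) * B'))"
fun eevk :: "nat \<Rightarrow> real \<Rightarrow> complex \<Rightarrow> est" where
 "eevk 0 q X = einit" | "eevk (Suc k) q X = estep (Suc k) q X (eevk k q X)"

fun inS :: "est \<Rightarrow> st \<Rightarrow> bool" where
 "inS (ESt S T A V DQ DT DQQ DQT DTT) (St S1 T1 A1 V1 DQ1 DT1 DQQ1 DQT1 DTT1) \<longleftrightarrow>
   inI S S1 \<and> inC T T1 \<and> inC A A1 \<and> inC V V1 \<and> inC DQ DQ1 \<and> inC DT DT1 \<and> inC DQQ DQQ1 \<and> inC DQT DQT1 \<and> inC DTT DTT1"

lemma nn_nonneg: "0 \<le> nn j" by (simp add: nn_def)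
lemma int_sq_nonneg: "0 \<le> (n::int) \<Longrightarrow> 0 \<le> n * (n - 1)"
  by (cases "n = 0") auto

lemma init_sound: "inS einit init"
  by (simp add: einit_def init_def czero_def inC_def inI_def sc_def)

lemma step_sound:
  assumes "inI q Q" "inC X XI" "inS e s"
  shows "inS (estep j q X e) (step j Q XI s)"
proof -
  obtain S T A V DQ DT DQQ DQT DTT where e: "e = ESt S T A V DQ DT DQQ DQT DTT" by (cases e)
  obtain S1 T1 A1 V1 DQ1 DT1 DQQ1 DQT1 DTT1 where s: "s = St S1 T1 A1 V1 DQ1 DT1 DQQ1 DQT1 DTT1" by (cases s)
  have h: "inI S S1" "inC T T1" "inC A A1" "inC V V1" "inC DQ DQ1" "inC DT DT1" "inC DQQ DQQ1" "inC DQT DQT1" "inC DTT DTT1"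
    using assms(3) e s by auto
  have s1: "inI (S*q) (imul S1 Q)" using h assms by (intro imul_sound)
  have a1: "inC (of_real (S*q) * T) (rsc (imul S1 Q) T1)" using s1 h by (intro rsc_sound)
  have b1: "inC (of_real (S*q) * A) (rsc (imul S1 Q) A1)" using s1 h by (intro rsc_sound)
  have t1: "inC (of_real (S*q) * T * X) (cmul (rsc (imul S1 Q) T1) XI)" using a1 assms by (intro cmul_sound)
  have n1: "0 \<le> nn j" "0 \<le> int j" "0 \<le> nn j * (nn j - 1)" "0 \<le> nn j * int j" "0 \<le> int j * (int j - 1)"
    using nn_nonneg int_sq_nonneg by auto
  let ?S = "S*q" and ?A = "of_real (S*q) * T" and ?B = "of_real (S*q) * A" and ?T = "of_real (S*q) * T * X"
  let ?S1 = "imul S1 Q"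
  have c1: "inC (V + ?T) (cadd V1 (cmul (rsc ?S1 T1) XI))" using h t1 by (intro cadd_sound)
  have c2: "inC (DQ + of_int (nn j) * ?T) (cadd DQ1 (nsc (nn j) (cmul (rsc ?S1 T1) XI)))"
    using h t1 n1 by (intro cadd_sound nsc_sound)
  have c3: "inC (DT + of_int (int j) * ?A) (cadd DT1 (nsc (int j) (rsc ?S1 T1)))"
    using h a1 n1 by (intro cadd_sound nsc_sound)
  have c4: "inC (DQQ + of_int (nn j * (nn j - 1)) * ?T) (cadd DQQ1 (nsc (nn j * (nn j - 1)) (cmul (rsc ?S1 T1) XI)))"
    using h t1 n1 by (intro cadd_sound nsc_sound)
  have c5: "inC (DQT + of_int (nn j * int j) * ?A) (cadd DQT1 (nsc (nn j * int j) (rsc ?S1 T1)))"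
    using h a1 n1 by (intro cadd_sound nsc_sound)
  have c6: "inC (DTT + of_int (int j * (int j - 1)) * ?B) (cadd DTT1 (nsc (int j * (int j - 1)) (rsc ?S1 A1)))"
    using h b1 n1 by (intro cadd_sound nsc_sound)
  show ?thesis unfolding e s estep.simps step.simps Let_def inS.simps
    using s1 t1 a1 c1 c2 c3 c4 c5 c6 by blast
qed

lemma evk_sound:
  assumes "inI q Q" "inC X XI"
  shows "inS (eevk k q X) (evk k Q XI)"
  by (induction k) (simp_all add: init_sound step_sound assms)



definition tT :: "real \<Rightarrow> complex \<Rightarrow> nat \<Rightarrow> complex" where "tT q X j = of_real (q ^ nnat j) * X ^ j"
definition aA :: "real \<Rightarrow> complex \<Rightarrow> nat \<Rightarrow> complex" where
  "aA q X j = (if j = 0 then 0 else of_real (q ^ nnat j) * X ^ (j - 1))"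
definition bB :: "real \<Rightarrow> complex \<Rightarrow> nat \<Rightarrow> complex" where "bB q X j = of_real (q ^ j) * aA q X (j - 1)"

lemma nnat_Suc: "nnat (Suc k) = nnat k + Suc k"
proof -
  have "Suc k * (Suc k + 1) = k * (k + 1) + 2 * Suc k" by simp
  then show ?thesis unfolding nnat_def by simp
qed

lemma nnat_0[simp]: "nnat 0 = 0" by (simp add: nnat_def)
lemma nn_0[simp]: "nn 0 = 0" by (simp add: nn_def)

lemma eevk_closed: "eevk k q X = ESt (q^k) (tT q X k) (aA q X k) (\<Sum>j\<le>k. tT q X j)
   (\<Sum>j\<le>k. of_int (nn j) * tT q X j) (\<Sum>j\<le>k. of_int (int j) * aA q X j)
   (\<Sum>j\<le>k. of_int (nn j * (nn j - 1)) * tT q X j) (\<Sum>j\<le>k. of_int (nn j * int j) * aA q X j)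
   (\<Sum>j\<le>k. of_int (int j * (int j - 1)) * bB q X j)"
proof (induction k)
  case 0
  then show ?case by (simp add: einit_def tT_def aA_def)
next
  case (Suc k)
  have a: "of_real (q^k * q) * tT q X k = aA q X (Suc k)"
    by (simp add: aA_def tT_def nnat_Suc power_add power_Suc ac_simps)
  have t: "aA q X (Suc k) * X = tT q X (Suc k)"
    by (simp add: aA_def tT_def ac_simps)
  have b: "of_real (q^k * q) * aA q X k = bB q X (Suc k)"
    by (simp add: bB_def ac_simps)
  show ?case unfolding eevk.simps Suc estep.simps Let_def a t b
    by (simp add: ac_simps)
qed



definition Xc :: "real \<Rightarrow> complex" where "Xc t = Complex (- t) (3 / sqrt 2)"
definition P :: "real \<Rightarrow> real \<Rightarrow> complex" where "P q t = (\<Sum>j\<le>9. of_real (q ^ nnat j) * Xc t ^ j)"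
definition Pq :: "real \<Rightarrow> real \<Rightarrow> complex" where
  "Pq q t = (\<Sum>j\<le>9. of_real (of_nat (nnat j) * q ^ (nnat j - 1)) * Xc t ^ j)"
definition Pqq :: "real \<Rightarrow> real \<Rightarrow> complex" where
  "Pqq q t = (\<Sum>j\<le>9. of_real (of_nat (nnat j) * (of_nat (nnat j - 1) * q ^ (nnat j - 1 - 1))) * Xc t ^ j)"
definition Pt :: "real \<Rightarrow> real \<Rightarrow> complex" where
  "Pt q t = (\<Sum>j\<le>9. of_real (q ^ nnat j) * (- (of_nat j * Xc t ^ (j - 1))))"
definition Pqt :: "real \<Rightarrow> real \<Rightarrow> complex" where
  "Pqt q t = (\<Sum>j\<le>9. of_real (of_nat (nnat j) * q ^ (nnat j - 1)) * (- (of_nat j * Xc t ^ (j - 1))))"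
definition Ptt :: "real \<Rightarrow> real \<Rightarrow> complex" where
  "Ptt q t = (\<Sum>j\<le>9. of_real (q ^ nnat j) * (- (of_nat j * (- (of_nat (j - 1) * Xc t ^ (j - 1 - 1))))))"

lemma Xc_eq: "Xc t = Complex 0 (3 / sqrt 2) - of_real t"
  by (simp add: Xc_def complex_eq_iff)

lemma Xpow_deriv: "((\<lambda>t. Xc t ^ m) has_vector_derivative (- (of_nat m * Xc s ^ (m - 1)))) (at s)"
proof -
  have "((\<lambda>z. (Complex 0 (3 / sqrt 2) - z) ^ m) has_field_derivative
          (- (of_nat m * (Complex 0 (3 / sqrt 2) - of_real s) ^ (m - 1)))) (at (of_real s))"
    by (auto intro!: derivative_eq_intros)
  from has_vector_derivative_real_field[OF this] show ?thesis unfolding Xc_eq .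
qed

lemma cpow_deriv: fixes Z :: complex shows "((\<lambda>x. of_real (c * x ^ n) * Z) has_vector_derivative (of_real (c * (of_nat n * q ^ (n - 1))) * Z)) (at q)"
proof -
  have "((\<lambda>x. c * x ^ n) has_real_derivative (c * (of_nat n * q ^ (n - 1)))) (at q)"
    by (auto intro!: derivative_eq_intros)
  then have "((\<lambda>x. of_real (c * x ^ n) :: complex) has_vector_derivative of_real (c * (of_nat n * q ^ (n - 1)))) (at q)"
    by (rule has_vector_derivative_of_real)
  then show ?thesis by (rule has_vector_derivative_mult_left)
qed

lemma cpow_deriv1: fixes Z :: complex shows "((\<lambda>x. of_real (x ^ n) * Z) has_vector_derivative (of_real (of_nat n * q ^ (n - 1)) * Z)) (at q)"
  using cpow_deriv[of 1 n Z q] by simp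

lemma P_dq: "((\<lambda>q. P q t) has_vector_derivative Pq q t) (at q)"
  unfolding P_def Pq_def
  by (intro has_vector_derivative_sum cpow_deriv1)

lemma Pq_dq: "((\<lambda>q. Pq q t) has_vector_derivative Pqq q t) (at q)"
  unfolding Pq_def Pqq_def
  by (intro has_vector_derivative_sum cpow_deriv)

lemma P_dt: "((\<lambda>t. P q t) has_vector_derivative Pt q t) (at t)"
  unfolding P_def Pt_def
  by (auto intro!: derivative_eq_intros Xpow_deriv)

lemma Pt_dt: "((\<lambda>t. Pt q t) has_vector_derivative Ptt q t) (at t)"
  unfolding Pt_def Ptt_def
  by (auto intro!: derivative_eq_intros Xpow_deriv)

lemma Pq_dt: "((\<lambda>t. Pq q t) has_vector_derivative Pqt q t) (at t)"
  unfolding Pq_def Pqt_def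
  by (auto intro!: derivative_eq_intros Xpow_deriv)



lemma nnat_ge2: "2 \<le> nnat (Suc (Suc m))"
  by (simp add: nnat_Suc)
lemma nnat_1[simp]: "nnat (Suc 0) = 1" by (simp add: nnat_def)

lemma powm1: "0 < n \<Longrightarrow> (q::real) * q ^ (n - 1) = q ^ n"
  using power_Suc[of q "n - 1"] by simp

lemma powm2: "2 \<le> n \<Longrightarrow> (q::real)^2 * q ^ (n - 1 - 1) = q ^ n"
proof -
  assume "2 \<le> n"
  then have "n = (n - 1 - 1) + 2" by simp
  then show ?thesis by (metis power_add mult.commute)
qed

lemma I2: "(\<Sum>j\<le>9. of_int (nn j) * tT q X j) = of_real q * (\<Sum>j\<le>9. of_real (of_nat (nnat j) * q ^ (nnat j - 1)) * X ^ j)"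
  unfolding sum_distrib_left
proof (rule sum.cong[OF refl])
  fix j :: nat
  show "of_int (nn j) * tT q X j = of_real q * (of_real (of_nat (nnat j) * q ^ (nnat j - 1)) * X ^ j)"
  proof (cases "nnat j = 0")
    case True then show ?thesis by (simp add: nn_def tT_def)
  next
    case False
    then have "q ^ nnat j = q * q ^ (nnat j - 1)" using powm1 by simp
    then show ?thesis by (simp add: nn_def tT_def)
  qed
qed

lemma I4: "(\<Sum>j\<le>9. of_int (nn j * (nn j - 1)) * tT q X j) = of_real (q^2) *
   (\<Sum>j\<le>9. of_real (of_nat (nnat j) * (of_nat (nnat j - 1) * q ^ (nnat j - 1 - 1))) * X ^ j)"
  unfolding sum_distrib_left
proof (rule sum.cong[OF refl])
  fix j :: nat
  show "of_int (nn j * (nn j - 1)) * tT q X j = of_real (q^2) * (of_real (of_nat (nnat j) * (of_nat (nnat j - 1) * q ^ (nnat j - 1 - 1))) * X ^ j)"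
  proof (cases "nnat j \<le> 1")
    case True
    then have "nnat j = 0 \<or> nnat j = 1" by auto
    then show ?thesis by (auto simp add: nn_def tT_def)
  next
    case False
    then have "q ^ nnat j = q^2 * q ^ (nnat j - 1 - 1)" using powm2 by simp
    moreover have "of_int (nn j - 1) = (of_nat (nnat j - 1) :: complex)" using False by (simp add: nn_def of_nat_diff)
    ultimately show ?thesis by (simp add: nn_def tT_def)
  qed
qed

lemma I3: "(\<Sum>j\<le>9. of_int (int j) * aA q X j) = - (\<Sum>j\<le>9. of_real (q ^ nnat j) * (- (of_nat j * X ^ (j - 1))))"
  unfolding sum_negf[symmetric]
  by (rule sum.cong[OF refl]) (simp add: aA_def)

lemma I5: "(\<Sum>j\<le>9. of_int (nn j * int j) * aA q X j) = - (of_real q *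
   (\<Sum>j\<le>9. of_real (of_nat (nnat j) * q ^ (nnat j - 1)) * (- (of_nat j * X ^ (j - 1)))))"
  unfolding sum_distrib_left sum_negf[symmetric]
proof (rule sum.cong[OF refl])
  fix j :: nat
  show "of_int (nn j * int j) * aA q X j = - (of_real q * (of_real (of_nat (nnat j) * q ^ (nnat j - 1)) * (- (of_nat j * X ^ (j - 1)))))"
  proof (cases "j = 0")
    case True then show ?thesis by (simp add: aA_def)
  next
    case False
    then have "0 < nnat j" unfolding nnat_def by (cases j) auto
    then have "q ^ nnat j = q * q ^ (nnat j - 1)" using powm1 by simp
    then show ?thesis using False by (simp add: nn_def aA_def)
  qed
qed

lemma I6: "(\<Sum>j\<le>9. of_int (int j * (int j - 1)) * bB q X j) =
   (\<Sum>j\<le>9. of_real (q ^ nnat j) * (- (of_nat j * (- (of_nat (j - 1) * X ^ (j - 1 - 1))))))"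
proof (rule sum.cong[OF refl])
  fix j :: nat
  show "of_int (int j * (int j - 1)) * bB q X j = of_real (q ^ nnat j) * (- (of_nat j * (- (of_nat (j - 1) * X ^ (j - 1 - 1)))))"
  proof (cases j)
    case 0 then show ?thesis by (simp add: bB_def aA_def)
  next
    case (Suc k)
    show ?thesis
    proof (cases k)
      case 0 then show ?thesis using Suc by (simp add: bB_def aA_def)
    next
      case (Suc m)
      have "q ^ nnat j = q ^ j * q ^ nnat (Suc m)" using \<open>j = Suc k\<close> Suc
        by (simp add: nnat_Suc power_add)
      then show ?thesis using \<open>j = Suc k\<close> Suc by (simp add: bB_def aA_def algebra_simps)
    qed
  qed
qed

lemma ev_closed: "eevk 9 q (Xc t) = ESt (q^9) (tT q (Xc t) 9) (aA q (Xc t) 9) (P q t)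
   (of_real q * Pq q t) (- Pt q t) (of_real (q^2) * Pqq q t) (- (of_real q * Pqt q t)) (Ptt q t)"
  unfolding eevk_closed[of 9 q "Xc t"] I2[of q "Xc t"] I3[of q "Xc t"] I4[of q "Xc t"] I5[of q "Xc t"] I6[of q "Xc t"]
  unfolding P_def Pq_def Pt_def Pqq_def Pqt_def Ptt_def tT_def ..



definition L :: "bool \<Rightarrow> complex \<Rightarrow> real" where "L b z = (if b then Re z else Im z)"

lemma L_deriv: "(f has_vector_derivative D) (at x) \<Longrightarrow> ((\<lambda>x. L b (f x)) has_real_derivative L b D) (at x)"
  unfolding L_def by (cases b) (auto intro: has_field_derivative_Re has_field_derivative_Im)

lemma L_scale: "L b (of_real r * z) = r * L b z" by (simp add: L_def)
lemma L_neg: "L b (- z) = - L b z" by (simp add: L_def)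

lemma taylor2:
  fixes g gd gdd :: "real \<Rightarrow> real"
  assumes d1: "\<And>s. (g has_real_derivative gd s) (at s)" and d2: "\<And>s. (gd has_real_derivative gdd s) (at s)"
    and M: "\<And>s. a \<le> s \<Longrightarrow> s \<le> b \<Longrightarrow> \<bar>gdd s\<bar> \<le> M"
    and "a \<le> c" "c \<le> b" "a \<le> x" "x \<le> b"
  shows "\<bar>g x - g c - gd c * (x - c)\<bar> \<le> M / 2 * (x - c)^2"
proof (cases "x = c")
  case True then show ?thesis by simp
next
  case False
  define diff where "diff = (\<lambda>m::nat. if m = 0 then g else if m = 1 then gd else gdd)"
  have "\<exists>t. (if x < c then x < t \<and> t < c else c < t \<and> t < x) \<and>
    g x = (\<Sum>m<2. (diff m c / fact m) * (x - c)^m) + (diff 2 t / fact 2) * (x - c)^2"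
  proof (rule Taylor[of 2 diff g a b c x])
    show "\<forall>(m::nat) t. m < 2 \<and> a \<le> t \<and> t \<le> b \<longrightarrow> DERIV (diff m) t :> diff (Suc m) t"
    proof (intro allI impI)
      fix m :: nat and t :: real assume "m < 2 \<and> a \<le> t \<and> t \<le> b"
      then have "m = 0 \<or> m = 1" by auto
      then show "DERIV (diff m) t :> diff (Suc m) t"
        using d1 d2 unfolding diff_def by auto
    qed
  qed (use assms False in \<open>auto simp: diff_def\<close>)
  then obtain t where t: "(if x < c then x < t \<and> t < c else c < t \<and> t < x)"
    and e: "g x = (\<Sum>m<2. (diff m c / fact m) * (x - c)^m) + (diff 2 t / fact 2) * (x - c)^2"
    by blast
  have tab: "a \<le> t" "t \<le> b" using t assms by (auto split: if_splits)
  have e2: "g x - g c - gd c * (x - c) = gdd t / 2 * (x - c)^2"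
    using e by (simp add: diff_def numeral_2_eq_2)
  have "\<bar>gdd t / 2 * (x - c)^2\<bar> = \<bar>gdd t\<bar> / 2 * (x - c)^2" by (simp add: abs_mult)
  also have "\<dots> \<le> M / 2 * (x - c)^2" using M[OF tab] by (intro mult_right_mono divide_right_mono) auto
  finally have fin: "\<bar>gdd t / 2 * (x - c)^2\<bar> \<le> M / 2 * (x - c)^2" .
  show ?thesis unfolding e2 by (rule fin)
qed

lemma taylor1:
  fixes g gd :: "real \<Rightarrow> real"
  assumes d1: "\<And>s. (g has_real_derivative gd s) (at s)"
    and M: "\<And>s. a \<le> s \<Longrightarrow> s \<le> b \<Longrightarrow> \<bar>gd s\<bar> \<le> M"
    and "a \<le> c" "c \<le> b" "a \<le> x" "x \<le> b"
  shows "\<bar>g x - g c\<bar> \<le> M * \<bar>x - c\<bar>"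
proof (cases "x = c")
  case True then show ?thesis by simp
next
  case False
  define diff where "diff = (\<lambda>m::nat. if m = 0 then g else gd)"
  have "\<exists>t. (if x < c then x < t \<and> t < c else c < t \<and> t < x) \<and>
    g x = (\<Sum>m<1. (diff m c / fact m) * (x - c)^m) + (diff 1 t / fact 1) * (x - c)^1"
  proof (rule Taylor[of 1 diff g a b c x])
    show "\<forall>(m::nat) t. m < 1 \<and> a \<le> t \<and> t \<le> b \<longrightarrow> DERIV (diff m) t :> diff (Suc m) t"
      using d1 unfolding diff_def by auto
  qed (use assms False in \<open>auto simp: diff_def\<close>)
  then obtain t where t: "(if x < c then x < t \<and> t < c else c < t \<and> t < x)"
    and e: "g x = (\<Sum>m<1. (diff m c / fact m) * (x - c)^m) + (diff 1 t / fact 1) * (x - c)^1"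
    by blast
  have tab: "a \<le> t" "t \<le> b" using t assms by (auto split: if_splits)
  have e2: "g x - g c = gd t * (x - c)" using e by (simp add: diff_def)
  have "\<bar>gd t * (x - c)\<bar> = \<bar>gd t\<bar> * \<bar>x - c\<bar>" by (simp add: abs_mult)
  also have "\<dots> \<le> M * \<bar>x - c\<bar>" using M[OF tab] by (intro mult_right_mono) auto
  finally show ?thesis using e2 by simp
qed

lemma leaf_real:
  fixes q qc t tc qa qb ta tb Mqq Mqt Mtt :: real
  assumes "qa \<le> q" "q \<le> qb" "qa \<le> qc" "qc \<le> qb" "ta \<le> t" "t \<le> tb" "ta \<le> tc" "tc \<le> tb"
    and Mqq: "\<And>\<xi> \<eta>. qa \<le> \<xi> \<Longrightarrow> \<xi> \<le> qb \<Longrightarrow> ta \<le> \<eta> \<Longrightarrow> \<eta> \<le> tb \<Longrightarrow> \<bar>L b (Pqq \<xi> \<eta>)\<bar> \<le> Mqq"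
    and Mqt: "\<And>\<eta>. ta \<le> \<eta> \<Longrightarrow> \<eta> \<le> tb \<Longrightarrow> \<bar>L b (Pqt qc \<eta>)\<bar> \<le> Mqt"
    and Mtt: "\<And>\<eta>. ta \<le> \<eta> \<Longrightarrow> \<eta> \<le> tb \<Longrightarrow> \<bar>L b (Ptt qc \<eta>)\<bar> \<le> Mtt"
  shows "L b (P qc tc) - \<bar>L b (Pq qc tc)\<bar> * \<bar>q - qc\<bar> - \<bar>L b (Pt qc tc)\<bar> * \<bar>t - tc\<bar>
     - Mqt * \<bar>q - qc\<bar> * \<bar>t - tc\<bar> - Mqq / 2 * (q - qc)^2 - Mtt / 2 * (t - tc)^2 \<le> L b (P q t)"
proof -
  have 1: "\<bar>L b (P q t) - L b (P qc t) - L b (Pq qc t) * (q - qc)\<bar> \<le> Mqq / 2 * (q - qc)^2"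
    by (rule taylor2[where g="\<lambda>x. L b (P x t)" and gd="\<lambda>x. L b (Pq x t)" and gdd="\<lambda>x. L b (Pqq x t)" and a=qa and b=qb])
       (auto intro: L_deriv P_dq Pq_dq Mqq assms)
  have 2: "\<bar>L b (Pq qc t) - L b (Pq qc tc)\<bar> \<le> Mqt * \<bar>t - tc\<bar>"
    by (rule taylor1[where g="\<lambda>x. L b (Pq qc x)" and gd="\<lambda>x. L b (Pqt qc x)" and a=ta and b=tb])
       (auto intro: L_deriv Pq_dt Mqt assms)
  have 3: "\<bar>L b (P qc t) - L b (P qc tc) - L b (Pt qc tc) * (t - tc)\<bar> \<le> Mtt / 2 * (t - tc)^2"
    by (rule taylor2[where g="\<lambda>x. L b (P qc x)" and gd="\<lambda>x. L b (Pt qc x)" and gdd="\<lambda>x. L b (Ptt qc x)" and a=ta and b=tb])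
       (auto intro: L_deriv P_dt Pt_dt Mtt assms)
  define u where "u = L b (Pq qc t)"
  define v where "v = L b (Pq qc tc)"
  have uv: "\<bar>u\<bar> \<le> \<bar>v\<bar> + Mqt * \<bar>t - tc\<bar>" using 2 unfolding u_def v_def by linarith
  have a4: "\<bar>u * (q - qc)\<bar> = \<bar>u\<bar> * \<bar>q - qc\<bar>" by (simp add: abs_mult)
  have b4: "\<bar>u\<bar> * \<bar>q - qc\<bar> \<le> (\<bar>v\<bar> + Mqt * \<bar>t - tc\<bar>) * \<bar>q - qc\<bar>" using uv by (rule mult_right_mono) simp
  have c4: "(\<bar>v\<bar> + Mqt * \<bar>t - tc\<bar>) * \<bar>q - qc\<bar> = \<bar>v\<bar> * \<bar>q - qc\<bar> + Mqt * \<bar>q - qc\<bar> * \<bar>t - tc\<bar>"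
    by (simp add: algebra_simps)
  have 4: "- (\<bar>v\<bar> * \<bar>q - qc\<bar> + Mqt * \<bar>q - qc\<bar> * \<bar>t - tc\<bar>) \<le> u * (q - qc)"
    using a4 b4 c4 abs_ge_minus_self[of "u * (q - qc)"] by linarith
  have 5: "- (\<bar>L b (Pt qc tc)\<bar> * \<bar>t - tc\<bar>) \<le> L b (Pt qc tc) * (t - tc)"
    using abs_ge_minus_self[of "L b (Pt qc tc) * (t - tc)"] by (simp add: abs_mult)
  show ?thesis using 1 3 4 5 unfolding u_def v_def by linarith
qed



definition wiv :: ivl where "wiv = (34755, 34756)"
definition ev :: "ivl \<Rightarrow> ivl \<Rightarrow> st" where "ev Q T = evk 9 Q (ineg T, wiv)"
definition mag :: "ivl \<Rightarrow> int" where "mag x = max \<bar>fst x\<bar> \<bar>snd x\<bar>"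
definition cpt :: "bool \<Rightarrow> civ \<Rightarrow> ivl" where "cpt b z = (if b then fst z else snd z)"

definition lhs :: "int \<Rightarrow> int \<Rightarrow> int \<Rightarrow> int \<Rightarrow> int \<Rightarrow> int \<Rightarrow> int \<Rightarrow> int \<Rightarrow> int \<Rightarrow> int" where
  "lhs q0 a g h m k l r s = 2 * q0 * q0 * sc * sc * a - 2 * q0 * sc * sc * g * r - 2 * q0 * q0 * sc * h * s - 2 * q0 * sc * m * r * s - sc * sc * k * r * r - q0 * q0 * l * s * s"

fun leafok :: "bool \<Rightarrow> ivl \<Rightarrow> ivl \<Rightarrow> bool" where
 "leafok b (q0,q1) (t0,t1) = (let qc = (q0+q1) div 2; tc = (t0+t1) div 2 in
   case ev (qc,qc) (tc,tc) of St _ _ _ Vc DQc DTc _ _ _ \<Rightarrow>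
   case ev (q0,q1) (t0,t1) of St _ _ _ _ _ _ DQQ DQT DTT \<Rightarrow>
   0 < q0 \<and> 2*q0*q0 * sc * sc * sc < 100 * lhs q0 (fst (cpt b Vc)) (mag (cpt b DQc)) (mag (cpt b DTc))
      (mag (cpt b DQT)) (mag (cpt b DQQ)) (mag (cpt b DTT)) (max (qc - q0) (q1 - qc)) (max (tc - t0) (t1 - tc)))"

lemma arith_final:
  fixes q0 a g h m k l r s :: int
  assumes "0 < q0" "2*q0*q0 * sc * sc * sc < 100 * lhs q0 a g h m k l r s"
  shows "1/100 < a/16384 - (g/q0) * (r/16384) - (h/16384) * (s/16384) - (m/q0) * (r/16384) * (s/16384)
     - (k*16384/q0^2)/2 * (r/16384)^2 - (l/16384)/2 * (s/16384)^2"
proof -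
  have q: "0 < real_of_int q0" using assms by simp
  have i: "real_of_int (2*q0*q0 * sc * sc * sc) < real_of_int (100 * lhs q0 a g h m k l r s)"
    using assms(2) by (simp only: of_int_less_iff)
  have e: "real_of_int (lhs q0 a g h m k l r s) / (2 * q0^2 * 16384^3) = a/16384 - (g/q0) * (r/16384) - (h/16384) * (s/16384) - (m/q0) * (r/16384) * (s/16384)
     - (k*16384/q0^2)/2 * (r/16384)^2 - (l/16384)/2 * (s/16384)^2"
    using q unfolding lhs_def sc_def by (simp add: field_simps power2_eq_square)
  have p: "0 < 2 * (real_of_int q0)^2 * 16384^3" using q by simp
  have "1/100 < real_of_int (lhs q0 a g h m k l r s) / (2 * q0^2 * 16384^3)"
    using i p unfolding sc_def by (simp add: field_simps power2_eq_square)
  then show ?thesis unfolding e .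
qed

lemma inI_lo: "inI x I \<Longrightarrow> real_of_int (fst I) \<le> x * 16384" by (simp add: inI_def)
lemma inI_mag: "inI x I \<Longrightarrow> \<bar>x\<bar> * 16384 \<le> real_of_int (mag I)"
  by (auto simp: inI_def mag_def abs_if)
lemma inC_L: "inC z Z \<Longrightarrow> inI (L b z) (cpt b Z)" by (simp add: inC_def L_def cpt_def)

lemma sqrt2_bounds: "141421 / 100000 \<le> sqrt 2" "sqrt 2 \<le> 141422 / 100000"
  by (rule real_le_rsqrt; simp add: power2_eq_square) (rule real_le_lsqrt; simp add: power2_eq_square)

lemma w_in: "inI (3 / sqrt 2) wiv"
proof -
  have e: "3 / sqrt 2 * 16384 = 49152 / sqrt 2" by simp
  have p: "0 < sqrt 2" by simp
  have "34755 \<le> 49152 / sqrt 2" using sqrt2_bounds(2) p by (simp add: field_simps)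
  moreover have "49152 / sqrt 2 \<le> 34756" using sqrt2_bounds(1) p by (simp add: field_simps)
  ultimately show ?thesis unfolding inI_def wiv_def e by simp
qed

lemma X_in: "inI t T \<Longrightarrow> inC (Xc t) (ineg T, wiv)"
  using ineg_sound[of t T] w_in by (simp add: inC_def Xc_def)

lemma ev_sound: "inI q Q \<Longrightarrow> inI t T \<Longrightarrow> inS (ESt (q^9) (tT q (Xc t) 9) (aA q (Xc t) 9) (P q t)
   (of_real q * Pq q t) (- Pt q t) (of_real (q^2) * Pqq q t) (- (of_real q * Pqt q t)) (Ptt q t)) (ev Q T)"
  using evk_sound[of q Q "Xc t" "(ineg T, wiv)" 9] X_in[of t T] unfolding ev_closed ev_def by simp

lemma combine:
  fixes LP LPc Gp Hp dq dt Gb Hb R Sv Mqt Mqq Mtt A :: real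
  assumes "LPc - Gp * \<bar>dq\<bar> - Hp * \<bar>dt\<bar> - Mqt * \<bar>dq\<bar> * \<bar>dt\<bar> - Mqq / 2 * dq^2 - Mtt / 2 * dt^2 \<le> LP"
    "A \<le> LPc" "0 \<le> Gp" "Gp \<le> Gb" "0 \<le> Hp" "Hp \<le> Hb" "\<bar>dq\<bar> \<le> R" "\<bar>dt\<bar> \<le> Sv"
    "0 \<le> Mqt" "0 \<le> Mqq" "0 \<le> Mtt"
  shows "A - Gb * R - Hb * Sv - Mqt * R * Sv - Mqq / 2 * R^2 - Mtt / 2 * Sv^2 \<le> LP"
proof -
  have 1: "Gp * \<bar>dq\<bar> \<le> Gb * R" using assms by (intro mult_mono) auto
  have 2: "Hp * \<bar>dt\<bar> \<le> Hb * Sv" using assms by (intro mult_mono) auto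
  have 3: "Mqt * \<bar>dq\<bar> * \<bar>dt\<bar> \<le> Mqt * R * Sv" using assms by (intro mult_mono mult_left_mono) auto
  have dq2: "dq^2 \<le> R^2" using assms(7) power_mono[of "\<bar>dq\<bar>" R 2] by simp
  have dt2: "dt^2 \<le> Sv^2" using assms(8) power_mono[of "\<bar>dt\<bar>" Sv 2] by simp
  have 4: "Mqq / 2 * dq^2 \<le> Mqq / 2 * R^2" using dq2 assms by (intro mult_left_mono) auto
  have 5: "Mtt / 2 * dt^2 \<le> Mtt / 2 * Sv^2" using dt2 assms by (intro mult_left_mono) auto
  show ?thesis using assms(1,2) 1 2 3 4 5 by linarith
qed



lemma leafok_sound:
  assumes lf: "leafok b (q0,q1) (t0,t1)" and qin: "inI q (q0,q1)" and tin: "inI t (t0,t1)"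
  shows "1/100 < L b (P q t)"
proof -
  define qc where "qc = (q0+q1) div 2"
  define tc where "tc = (t0+t1) div 2"
  obtain S1 T1 A1 Vc DQc DTc x1 x2 x3 where E1: "ev (qc,qc) (tc,tc) = St S1 T1 A1 Vc DQc DTc x1 x2 x3"
    by (cases "ev (qc,qc) (tc,tc)")
  obtain S2 T2 A2 y1 y2 y3 DQQ DQT DTT where E2: "ev (q0,q1) (t0,t1) = St S2 T2 A2 y1 y2 y3 DQQ DQT DTT"
    by (cases "ev (q0,q1) (t0,t1)")
  define a where "a = fst (cpt b Vc)"
  define g where "g = mag (cpt b DQc)"
  define h where "h = mag (cpt b DTc)"
  define m where "m = mag (cpt b DQT)"
  define k where "k = mag (cpt b DQQ)"
  define l where "l = mag (cpt b DTT)"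
  define r where "r = max (qc - q0) (q1 - qc)"
  define s where "s = max (tc - t0) (t1 - tc)"
  have c: "0 < q0" "2 * q0 * q0 * sc * sc * sc < 100 * lhs q0 a g h m k l r s"
    using lf unfolding leafok.simps Let_def qc_def[symmetric] tc_def[symmetric] E1 E2 st.case
      a_def g_def h_def m_def k_def l_def r_def s_def by auto
  have q0q1: "q0 \<le> q1" using qin by (simp add: inI_def)
  have t0t1: "t0 \<le> t1" using tin by (simp add: inI_def)
  define qr where "qr = real_of_int qc / 16384"
  define tr where "tr = real_of_int tc / 16384"
  have qcb: "q0 \<le> qc" "qc \<le> q1" using q0q1 unfolding qc_def by linarith+
  have tcb: "t0 \<le> tc" "tc \<le> t1" using t0t1 unfolding tc_def by linarith+
  have q0p: "0 < real_of_int q0" using c by simp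
  have qrp: "0 < qr" using qcb c unfolding qr_def by simp
  have qr_in: "inI qr (qc,qc)" by (simp add: inI_def qr_def)
  have tr_in: "inI tr (tc,tc)" by (simp add: inI_def tr_def)
  have S1: "inC (P qr tr) Vc" "inC (of_real qr * Pq qr tr) DQc" "inC (- Pt qr tr) DTc"
    using ev_sound[OF qr_in tr_in] unfolding E1 by auto
  have S2: "inC (of_real (\<xi>^2) * Pqq \<xi> \<eta>) DQQ" "inC (- (of_real \<xi> * Pqt \<xi> \<eta>)) DQT" "inC (Ptt \<xi> \<eta>) DTT"
    if "inI \<xi> (q0,q1)" "inI \<eta> (t0,t1)" for \<xi> \<eta>
    using ev_sound[OF that] unfolding E2 by auto
  have A: "real_of_int a / 16384 \<le> L b (P qr tr)"
    using inI_lo[OF inC_L[OF S1(1)]] unfolding a_def by simp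
  have gq: "qr * \<bar>L b (Pq qr tr)\<bar> * 16384 \<le> real_of_int g"
    using inI_mag[OF inC_L[OF S1(2)]] qrp unfolding g_def L_scale by (simp add: abs_mult)
  have G: "\<bar>L b (Pq qr tr)\<bar> \<le> real_of_int g / real_of_int q0"
  proof -
    have "real_of_int q0 * \<bar>L b (Pq qr tr)\<bar> \<le> (qr * 16384) * \<bar>L b (Pq qr tr)\<bar>"
      using qcb unfolding qr_def by (intro mult_right_mono) auto
    also have "\<dots> \<le> real_of_int g" using gq by (simp add: ac_simps)
    finally show ?thesis using q0p by (simp add: field_simps)
  qed
  have H: "\<bar>L b (Pt qr tr)\<bar> \<le> real_of_int h / 16384"
    using inI_mag[OF inC_L[OF S1(3)]] unfolding h_def L_neg by simp
  have qa: "inI \<xi> (q0,q1) \<longleftrightarrow> real_of_int q0 / 16384 \<le> \<xi> \<and> \<xi> \<le> real_of_int q1 / 16384" for \<xi>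
    by (auto simp: inI_def field_simps)
  have ta: "inI \<eta> (t0,t1) \<longleftrightarrow> real_of_int t0 / 16384 \<le> \<eta> \<and> \<eta> \<le> real_of_int t1 / 16384" for \<eta>
    by (auto simp: inI_def field_simps)
  have qr_box: "inI qr (q0,q1)" using qcb unfolding qr_def inI_def by simp
  have Mqt: "\<bar>L b (Pqt qr \<eta>)\<bar> \<le> real_of_int m / real_of_int q0" if "inI \<eta> (t0,t1)" for \<eta>
  proof -
    have mq: "qr * \<bar>L b (Pqt qr \<eta>)\<bar> * 16384 \<le> real_of_int m"
      using inI_mag[OF inC_L[OF S2(2)[OF qr_box that]]] qrp unfolding m_def L_scale L_neg by (simp add: abs_mult)
    have "real_of_int q0 * \<bar>L b (Pqt qr \<eta>)\<bar> \<le> (qr * 16384) * \<bar>L b (Pqt qr \<eta>)\<bar>"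
      using qcb unfolding qr_def by (intro mult_right_mono) auto
    also have "\<dots> \<le> real_of_int m" using mq by (simp add: ac_simps)
    finally show ?thesis using q0p by (simp add: field_simps)
  qed
  have Mqq: "\<bar>L b (Pqq \<xi> \<eta>)\<bar> \<le> real_of_int k * 16384 / (real_of_int q0)^2" if "inI \<xi> (q0,q1)" "inI \<eta> (t0,t1)" for \<xi> \<eta>
  proof -
    have xi: "real_of_int q0 \<le> \<xi> * 16384" using that(1) by (simp add: inI_def)
    have kq: "\<xi>^2 * \<bar>L b (Pqq \<xi> \<eta>)\<bar> * 16384 \<le> real_of_int k"
      using inI_mag[OF inC_L[OF S2(1)[OF that]]] unfolding k_def L_scale by (simp add: abs_mult)
    have sq: "(real_of_int q0)^2 \<le> (\<xi> * 16384)^2" using xi q0p by (intro power_mono) auto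
    have "(real_of_int q0)^2 * \<bar>L b (Pqq \<xi> \<eta>)\<bar> \<le> (\<xi> * 16384)^2 * \<bar>L b (Pqq \<xi> \<eta>)\<bar>"
      using sq by (intro mult_right_mono) auto
    also have "\<dots> = (\<xi>^2 * \<bar>L b (Pqq \<xi> \<eta>)\<bar> * 16384) * 16384" by (simp add: power_mult_distrib)
    also have "\<dots> \<le> real_of_int k * 16384" using kq by simp
    finally show ?thesis using q0p by (simp add: field_simps)
  qed
  have Mtt: "\<bar>L b (Ptt qr \<eta>)\<bar> \<le> real_of_int l / 16384" if "inI \<eta> (t0,t1)" for \<eta>
    using inI_mag[OF inC_L[OF S2(3)[OF qr_box that]]] unfolding l_def by simp
  have LR: "L b (P qr tr) - \<bar>L b (Pq qr tr)\<bar> * \<bar>q - qr\<bar> - \<bar>L b (Pt qr tr)\<bar> * \<bar>t - tr\<bar>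
     - (real_of_int m / real_of_int q0) * \<bar>q - qr\<bar> * \<bar>t - tr\<bar> - (real_of_int k * 16384 / (real_of_int q0)^2) / 2 * (q - qr)^2
     - (real_of_int l / 16384) / 2 * (t - tr)^2 \<le> L b (P q t)"
  proof (rule leaf_real[of "real_of_int q0 / 16384" q "real_of_int q1 / 16384" qr "real_of_int t0 / 16384" t "real_of_int t1 / 16384" tr])
    show "real_of_int q0 / 16384 \<le> q" "q \<le> real_of_int q1 / 16384" using qin qa by auto
    show "real_of_int t0 / 16384 \<le> t" "t \<le> real_of_int t1 / 16384" using tin ta by auto
    show "real_of_int q0 / 16384 \<le> qr" "qr \<le> real_of_int q1 / 16384" using qr_box qa by auto
    show "real_of_int t0 / 16384 \<le> tr" "tr \<le> real_of_int t1 / 16384" using tcb unfolding tr_def by auto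
    show "\<bar>L b (Pqq \<xi> \<eta>)\<bar> \<le> real_of_int k * 16384 / (real_of_int q0)^2"
      if "real_of_int q0 / 16384 \<le> \<xi>" "\<xi> \<le> real_of_int q1 / 16384" "real_of_int t0 / 16384 \<le> \<eta>" "\<eta> \<le> real_of_int t1 / 16384" for \<xi> \<eta>
      using Mqq that qa ta by blast
    show "\<bar>L b (Pqt qr \<eta>)\<bar> \<le> real_of_int m / real_of_int q0"
      if "real_of_int t0 / 16384 \<le> \<eta>" "\<eta> \<le> real_of_int t1 / 16384" for \<eta>
      using Mqt that ta by blast
    show "\<bar>L b (Ptt qr \<eta>)\<bar> \<le> real_of_int l / 16384"
      if "real_of_int t0 / 16384 \<le> \<eta>" "\<eta> \<le> real_of_int t1 / 16384" for \<eta>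
      using Mtt that ta by blast
  qed
  have dq: "\<bar>q - qr\<bar> \<le> real_of_int r / 16384"
  proof -
    have "real_of_int q0 \<le> q * 16384" "q * 16384 \<le> real_of_int q1" using qin by (auto simp: inI_def)
    moreover have "real_of_int (qc - q0) \<le> real_of_int r" "real_of_int (q1 - qc) \<le> real_of_int r" unfolding r_def by auto
    ultimately have "\<bar>q * 16384 - real_of_int qc\<bar> \<le> real_of_int r" by auto
    then have "\<bar>q * 16384 - real_of_int qc\<bar> / 16384 \<le> real_of_int r / 16384" by (rule divide_right_mono) simp
    moreover have "q - qr = (q * 16384 - real_of_int qc) / 16384" unfolding qr_def by (simp add: field_simps)
    ultimately show ?thesis by (simp only: abs_divide abs_numeral)
  qed
  have dt: "\<bar>t - tr\<bar> \<le> real_of_int s / 16384"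
  proof -
    have "real_of_int t0 \<le> t * 16384" "t * 16384 \<le> real_of_int t1" using tin by (auto simp: inI_def)
    moreover have "real_of_int (tc - t0) \<le> real_of_int s" "real_of_int (t1 - tc) \<le> real_of_int s" unfolding s_def by auto
    ultimately have "\<bar>t * 16384 - real_of_int tc\<bar> \<le> real_of_int s" by auto
    then have "\<bar>t * 16384 - real_of_int tc\<bar> / 16384 \<le> real_of_int s / 16384" by (rule divide_right_mono) simp
    moreover have "t - tr = (t * 16384 - real_of_int tc) / 16384" unfolding tr_def by (simp add: field_simps)
    ultimately show ?thesis by (simp only: abs_divide abs_numeral)
  qed
  have nn: "0 \<le> real_of_int m / real_of_int q0" "0 \<le> real_of_int k * 16384 / (real_of_int q0)^2" "0 \<le> real_of_int l / 16384"
    using q0p by (auto simp: m_def k_def l_def mag_def)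
  have fin: "real_of_int a / 16384 - (real_of_int g / real_of_int q0) * (real_of_int r / 16384) - (real_of_int h / 16384) * (real_of_int s / 16384)
     - (real_of_int m / real_of_int q0) * (real_of_int r / 16384) * (real_of_int s / 16384)
     - (real_of_int k * 16384 / (real_of_int q0)^2) / 2 * (real_of_int r / 16384)^2 - (real_of_int l / 16384) / 2 * (real_of_int s / 16384)^2 \<le> L b (P q t)"
    by (rule combine[OF LR A _ G _ H dq dt nn]) auto
  have af: "1/100 < real_of_int a / 16384 - (real_of_int g / real_of_int q0) * (real_of_int r / 16384) - (real_of_int h / 16384) * (real_of_int s / 16384)
     - (real_of_int m / real_of_int q0) * (real_of_int r / 16384) * (real_of_int s / 16384)
     - (real_of_int k * 16384 / (real_of_int q0)^2) / 2 * (real_of_int r / 16384)^2 - (real_of_int l / 16384) / 2 * (real_of_int s / 16384)^2"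
    using arith_final[OF c] by simp
  show ?thesis using fin af by linarith
qed



datatype tree = Leaf bool | SQ tree tree | ST tree tree

fun chk :: "tree \<Rightarrow> ivl \<Rightarrow> ivl \<Rightarrow> bool" where
  "chk (Leaf b) Q T = leafok b Q T"
| "chk (SQ l r) (q0,q1) T = (let m = (q0+q1) div 2 in chk l (q0,m) T \<and> chk r (m,q1) T)"
| "chk (ST l r) Q (t0,t1) = (let m = (t0+t1) div 2 in chk l Q (t0,m) \<and> chk r Q (m,t1))"

lemma inI_split: "inI x (a,b) \<Longrightarrow> inI x (a,m) \<or> inI x (m,b)"
  by (auto simp: inI_def)

lemma chk_sound: "chk tr (q0,q1) (t0,t1) \<Longrightarrow> inI q (q0,q1) \<Longrightarrow> inI t (t0,t1) \<Longrightarrow> \<exists>b. 1/100 < L b (P q t)"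
proof (induction tr arbitrary: q0 q1 t0 t1)
  case (Leaf b)
  then show ?case using leafok_sound[of b q0 q1 t0 t1 q t] unfolding chk.simps by blast
next
  case (SQ l r)
  define m where "m = (q0+q1) div 2"
  have c: "chk l (q0,m) (t0,t1)" "chk r (m,q1) (t0,t1)" using SQ.prems(1) by (simp_all add: m_def Let_def)
  from inI_split[OF SQ.prems(2), of m] show ?case
  proof
    assume "inI q (q0,m)" then show ?case using SQ.IH(1)[OF c(1) _ SQ.prems(3)] by blast
  next
    assume "inI q (m,q1)" then show ?case using SQ.IH(2)[OF c(2) _ SQ.prems(3)] by blast
  qed
next
  case (ST l r)
  define m where "m = (t0+t1) div 2"
  have c: "chk l (q0,q1) (t0,m)" "chk r (q0,q1) (m,t1)" using ST.prems(1) by (simp_all add: m_def Let_def)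
  from inI_split[OF ST.prems(3), of m] show ?case
  proof
    assume "inI t (t0,m)" then show ?case using ST.IH(1)[OF c(1) ST.prems(2)] by blast
  next
    assume "inI t (m,t1)" then show ?case using ST.IH(2)[OF c(2) ST.prems(2)] by blast
  qed
qed

definition the_tree :: tree where "the_tree = (SQ ((SQ ((ST (Leaf False) ((SQ (Leaf True) (Leaf True))))) ((ST ((SQ (Leaf True) (Leaf True))) ((SQ (Leaf True) (Leaf True))))))) ((SQ ((ST ((SQ (Leaf True) ((ST (Leaf True) (Leaf True))))) ((SQ ((ST (Leaf True) (Leaf True))) ((ST (Leaf True) (Leaf True))))))) ((ST ((SQ ((ST (Leaf True) (Leaf True))) ((ST (Leaf True) ((SQ (Leaf True) (Leaf True))))))) ((SQ ((ST (Leaf True) ((SQ (Leaf True) (Leaf True))))) ((ST ((SQ (Leaf True) (Leaf True))) ((SQ (Leaf True) (Leaf True))))))))))))"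

lemma the_check: "chk the_tree (9830,12288) (16384,34756)"
  unfolding the_tree_def by code_simp



lemma nnat_shift: "55 + 11 * j \<le> nnat (j + 10)"
proof -
  have "2 * (55 + 11 * j) \<le> (j + 10) * (j + 10 + 1)" by (simp add: algebra_simps)
  then have "2 * (55 + 11 * j) div 2 \<le> (j + 10) * (j + 10 + 1) div 2" by (rule div_le_mono)
  then show ?thesis unfolding nnat_def by simp
qed

lemma tail_bound:
  fixes q :: real and x :: complex
  assumes q: "0 \<le> q" "q \<le> 3/4" and x: "cmod x \<le> 3"
  shows "cmod (ptheta q x - (\<Sum>j\<le>9. of_real (q ^ nnat j) * x ^ j)) \<le> 91/10000"
proof -
  define f where "f j = complex_of_real (q ^ (j * (j + 1) div 2)) * x ^ j" for j
  define C :: real where "C = (3/4)^55 * 3^10"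
  define r :: real where "r = (3/4)^11 * 3"
  have r: "0 \<le> r" "r < 1" unfolding r_def by (simp_all add: power_divide)
  have bnd: "norm (f (j + 10)) \<le> C * r^j" for j
  proof -
    have "norm (f (j + 10)) = q ^ nnat (j + 10) * cmod x ^ (j + 10)"
      unfolding f_def nnat_def using q by (simp add: norm_mult norm_power)
    also have "\<dots> \<le> (3/4) ^ nnat (j + 10) * 3 ^ (j + 10)"
      using q x by (intro mult_mono power_mono) auto
    also have "(3/4::real) ^ nnat (j + 10) \<le> (3/4) ^ (55 + 11 * j)"
      using nnat_shift by (intro power_decreasing) auto
    then have "(3/4::real) ^ nnat (j + 10) * 3 ^ (j + 10) \<le> (3/4) ^ (55 + 11 * j) * 3 ^ (j + 10)"
      by (intro mult_right_mono) auto
    also have "(3/4::real) ^ (55 + 11 * j) * 3 ^ (j + 10) = C * r^j"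
      unfolding C_def r_def by (simp add: power_add power_mult power_mult_distrib mult_ac flip: power_mult)
    finally show ?thesis .
  qed
  have sg: "summable (\<lambda>j. C * r^j)" using r by (intro summable_mult summable_geometric) simp
  have sf10: "summable (\<lambda>j. f (j + 10))" by (rule summable_comparison_test'[OF sg bnd])
  then have sf: "summable f" by simp
  have "ptheta q x = (\<Sum>j. f (j + 10)) + (\<Sum>j<10. f j)"
    unfolding ptheta_def f_def[symmetric] by (rule suminf_split_initial_segment[OF sf])
  moreover have "(\<Sum>j<10. f j) = (\<Sum>j\<le>9. of_real (q ^ nnat j) * x ^ j)"
    unfolding f_def nnat_def by (rule sum.cong) auto
  ultimately have e: "ptheta q x - (\<Sum>j\<le>9. of_real (q ^ nnat j) * x ^ j) = (\<Sum>j. f (j + 10))" by simp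
  have "cmod (\<Sum>j. f (j + 10)) \<le> (\<Sum>j. C * r^j)" by (rule norm_suminf_le[OF bnd sg])
  also have "\<dots> = C / (1 - r)" using r by (simp add: suminf_mult suminf_geometric)
  also have "\<dots> \<le> 91/10000" unfolding C_def r_def by (simp add: field_simps)
  finally show ?thesis unfolding e .
qed

lemma L_abs_le: "\<bar>L b z\<bar> \<le> cmod z"
  unfolding L_def using abs_Re_le_cmod abs_Im_le_cmod by auto
lemma L_diff: "L b (z - u) = L b z - L b u" by (simp add: L_def)

theorem lemma9:
  fixes q t :: real
  assumes "0.6 \<le> q" "q \<le> 0.75" "1 \<le> t" "t \<le> 3 / sqrt 2"
  shows "ptheta q (Complex (- t) (3 / sqrt 2)) \<noteq> 0"
proof
  assume z: "ptheta q (Complex (- t) (3 / sqrt 2)) = 0"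
  have qin: "inI q (9830,12288)" using assms(1,2) by (simp add: inI_def)
  have "t * 16384 \<le> 3 / sqrt 2 * 16384" using assms(4) by simp
  also have "\<dots> \<le> 34756" using w_in by (simp add: inI_def wiv_def)
  finally have tin: "inI t (16384,34756)" using assms(3) by (simp add: inI_def)
  obtain b where b: "1/100 < L b (P q t)" using chk_sound[OF the_check[unfolded] qin tin] by blast
  have x: "Xc t = Complex (- t) (3 / sqrt 2)" by (simp add: Xc_def)
  have t2: "t^2 \<le> (3 / sqrt 2)^2" using assms(3,4) by (intro power_mono) auto
  have cm: "cmod (Complex (- t) (3 / sqrt 2)) \<le> 3"
    unfolding complex_norm using t2 by (intro real_le_lsqrt) (auto simp: power_divide)
  have q34: "q \<le> 3/4" using assms(2) by simp
  have q0: "0 \<le> q" using assms(1) by simp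
  have tb: "cmod (ptheta q (Complex (- t) (3 / sqrt 2)) - P q t) \<le> 91/10000"
    using tail_bound[OF q0 q34 cm] unfolding P_def x .
  have "\<bar>L b (ptheta q (Complex (- t) (3 / sqrt 2)) - P q t)\<bar> \<le> 91/10000"
    using L_abs_le tb order_trans by blast
  then show False using b z unfolding L_diff by (cases b) (simp_all add: L_def)
qed

end
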